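(* Let $\mathbb{F}$ be a field, $d\geq3$ and $V$ a vector space over $\mathbb{F}$ of dimension $d+1$. Let $E^*_0,\dots,E^*_d$ be a system of mutually orthogonal idempotents in $\mathrm{End}(V)$ and $A\in\mathrm{End}(V)$ with $E^*_iAE^*_j=0$ if $|i-j|>1$ and $E^*_iAE^*_j\neq0$ if $|i-j|=1$. Assume $A$ is multiplicity-free and bipartite with primitive idempotents $E_0,\dots,E_d$ and eigenvalues $\theta_0,\dots,\theta_d$. Let $\theta^*_0,\dots,\theta^*_d\in\mathbb{F}$ be mutually distinct and $A^*=\sum_i\theta^*_iE^*_i$. Assume $E_0$ is normalizing and that in $\Delta$ the vertex $E_0$ is adjacent to $E_1$ and no other vertex. Then for $1\le i\le d-1$, $$\theta_0\frac{\theta^*_{i-1}-\theta^*_1}{\theta^*_i-\theta^*_0}\neq\theta_1\qquad\text{and}\qquad\theta_0\frac{\theta^*_{i+1}-\theta^*_1}{\theta^*_i-\theta^*_0}\neq\theta_1.$$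
   Context: A system of mutually orthogonal idempotents: $E^*_iE^*_j=\delta_{ij}E^*_i$, $\operatorname{rank}E^*_i=1$. $A$ multiplicity-free: $d+1$ distinct eigenvalues in $\mathbb{F}$; $E_i$ is the projection onto the $\theta_i$-eigenspace along the other eigenspaces. Bipartite: $\operatorname{tr}(E^*_iA)=0$ for all $i$. $\Delta$: graph on $E_0,\dots,E_d$ with $E_i\neq E_j$ adjacent iff $E_iA^*E_j\neq0$. The matrix $Y$ representing $A$ w.r.t. a basis $v_0,\dots,v_d$ satisfies $Av_j=\sum_iY_{ij}v_i$. An eigenvalue $\theta$ is normalizing if some basis with $v_i\in E^*_iV$ makes every row sum of the matrix representing $A$ equal to $\theta$; $E_i$ is normalizing if $\theta_i$ is. *)

theory Defs
  imports "Jordan_Normal_Form.DL_Rank" "Jordan_Normal_Form.Char_Poly"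
begin

text \<open>Linear algebra on V = F^(d+1); End(V) is represented by (d+1) x (d+1) matrices.\<close>

definition mtrace :: "'a::comm_ring_1 mat \<Rightarrow> 'a" where
  "mtrace M = (\<Sum>i<dim_row M. M $$ (i, i))"

definition msum :: "nat \<Rightarrow> ('i \<Rightarrow> 'a::comm_ring_1 mat) \<Rightarrow> 'i set \<Rightarrow> 'a mat" where
  "msum n f I = mat n n (\<lambda>(r, c). \<Sum>i\<in>I. f i $$ (r, c))"

definition orth_idem_system :: "nat \<Rightarrow> (nat \<Rightarrow> 'a::field mat) \<Rightarrow> bool" where
  "orth_idem_system d Es \<longleftrightarrow>
     (\<forall>i\<le>d. Es i \<in> carrier_mat (d+1) (d+1) \<and> vec_space.rank (d+1) (Es i) = 1) \<and>
     (\<forall>i\<le>d. \<forall>j\<le>d. Es i * Es j = (if i = j then Es i else 0\<^sub>m (d+1) (d+1)))"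

definition eigenspace_of :: "'a::field mat \<Rightarrow> 'a \<Rightarrow> 'a vec set" where
  "eigenspace_of A t = {v \<in> carrier_vec (dim_row A). A *\<^sub>v v = t \<cdot>\<^sub>v v}"

definition eigenspace_sum :: "'a::field mat \<Rightarrow> (nat \<Rightarrow> 'a) \<Rightarrow> nat set \<Rightarrow> 'a vec set" where
  "eigenspace_sum A th J =
     {finsum_vec TYPE('a) (dim_row A) w J | w. \<forall>j\<in>J. w j \<in> eigenspace_of A (th j)}"

text \<open>A is multiplicity-free with eigenvalues theta_0..theta_d (distinct, in F), and E_i is the
  projection onto the theta_i-eigenspace along the other eigenspaces.\<close>
definition mult_free_with :: "nat \<Rightarrow> 'a::field mat \<Rightarrow> (nat \<Rightarrow> 'a) \<Rightarrow> (nat \<Rightarrow> 'a mat) \<Rightarrow> bool" where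
  "mult_free_with d A th E \<longleftrightarrow>
     inj_on th {0..d} \<and> (\<forall>i\<le>d. eigenvalue A (th i)) \<and>
     (\<forall>i\<le>d. E i \<in> carrier_mat (d+1) (d+1) \<and>
        (\<forall>v\<in>carrier_vec (d+1). E i *\<^sub>v v \<in> eigenspace_of A (th i) \<and>
            v - E i *\<^sub>v v \<in> eigenspace_sum A th ({0..d} - {i})))"

definition bipartite_wrt :: "nat \<Rightarrow> (nat \<Rightarrow> 'a::field mat) \<Rightarrow> 'a mat \<Rightarrow> bool" where
  "bipartite_wrt d Es A \<longleftrightarrow> (\<forall>i\<le>d. mtrace (Es i * A) = 0)"

definition Delta_adj :: "nat \<Rightarrow> (nat \<Rightarrow> 'a::field mat) \<Rightarrow> 'a mat \<Rightarrow> nat \<Rightarrow> nat \<Rightarrow> bool" where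
  "Delta_adj d E As i j \<longleftrightarrow> E i \<noteq> E j \<and> E i * As * E j \<noteq> 0\<^sub>m (d+1) (d+1)"

definition normalizing :: "nat \<Rightarrow> (nat \<Rightarrow> 'a::field mat) \<Rightarrow> 'a mat \<Rightarrow> 'a \<Rightarrow> bool" where
  "normalizing d Es A t \<longleftrightarrow>
     (\<exists>v :: nat \<Rightarrow> 'a vec. \<exists>Y :: nat \<Rightarrow> nat \<Rightarrow> 'a.
        (\<forall>i\<le>d. v i \<in> carrier_vec (d+1) \<and> v i \<in> (\<lambda>x. Es i *\<^sub>v x) ` carrier_vec (d+1)) \<and>
        (\<forall>c :: nat \<Rightarrow> 'a. finsum_vec TYPE('a) (d+1) (\<lambda>i. c i \<cdot>\<^sub>v v i) {0..d} = 0\<^sub>v (d+1)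
            \<longrightarrow> (\<forall>i\<le>d. c i = 0)) \<and>
        (\<forall>j\<le>d. A *\<^sub>v v j = finsum_vec TYPE('a) (d+1) (\<lambda>i. Y i j \<cdot>\<^sub>v v i) {0..d}) \<and>
        (\<forall>i\<le>d. (\<Sum>j\<le>d. Y i j) = t))"

end

theory Submission
  imports Defs
begin

lemma tri_sum:
  fixes g :: "nat \<Rightarrow> 'a::comm_monoid_add"
  assumes "j \<le> d" and "\<forall>i\<le>d. (i > j + 1 \<or> j > i + 1 \<or> i = j) \<longrightarrow> g i = 0"
  shows "(\<Sum>i\<le>d. g i) = (if 0 < j then g (j-1) else 0) + (if j < d then g (j+1) else 0)"
proof -
  let ?S = "{i. i \<le> d \<and> (i + 1 = j \<or> i = j + 1)}"
  have "(\<Sum>i\<le>d. g i) = (\<Sum>i\<in>?S. g i)"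
    apply (rule sum.mono_neutral_right)
    apply auto
    subgoal for i using assms(2)[rule_format, of i] by arith
    done
  also have "?S = (if 0 < j then {j-1} else {}) \<union> (if j < d then {j+1} else {})"
    using assms(1) by auto
  also have "(\<Sum>i\<in>\<dots>. g i) = (if 0 < j then g (j-1) else 0) + (if j < d then g (j+1) else 0)"
    by (cases "0 < j"; cases "j < d") (auto simp: add.commute)
  finally show ?thesis .
qed

lemma lin_aux:
  fixes P Q :: "'a::field"
  assumes "P + Q = s" "a * P + b * Q = R"
  shows "(b - a) * Q = R - a * s" "(a - b) * P = R - b * s"
  using assms by (auto simp: algebra_simps)

lemma final_scalar:
  fixes Y :: "nat \<Rightarrow> nat \<Rightarrow> 'a::field" and y ths :: "nat \<Rightarrow> 'a"
  assumes d1: "d \<ge> 1"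
    and Ytri: "\<forall>i\<le>d. \<forall>j\<le>d. (i > j + 1 \<or> j > i + 1) \<longrightarrow> Y i j = 0"
    and Ydiag: "\<forall>i\<le>d. Y i i = 0"
    and Ynz: "\<forall>i<d. Y i (i+1) \<noteq> 0 \<and> Y (i+1) i \<noteq> 0"
    and inj: "inj_on ths {0..d}"
    and ynz: "\<exists>k\<le>d. y k \<noteq> 0"
    and L: "\<forall>j\<le>d. (\<Sum>i\<le>d. y i * Y i j) = t0 * y j"
    and M: "\<forall>j\<le>d. (\<Sum>i\<le>d. y i * ths i * Y i j) = t1 * ths j * y j + \<kappa> * y j"
  shows "\<forall>i. 1 \<le> i \<and> i \<le> d - 1 \<longrightarrow>
           t0 * ((ths (i-1) - ths 1) / (ths i - ths 0)) \<noteq> t1 \<and>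
           t0 * ((ths (i+1) - ths 1) / (ths i - ths 0)) \<noteq> t1"
proof -
  have Lt: "(if 0 < j then y (j-1) * Y (j-1) j else 0) + (if j < d then y (j+1) * Y (j+1) j else 0)
        = t0 * y j" if "j \<le> d" for j
  proof -
    have "(\<Sum>i\<le>d. y i * Y i j) = (if 0 < j then y (j-1) * Y (j-1) j else 0) + (if j < d then y (j+1) * Y (j+1) j else 0)"
      by (rule tri_sum[OF that]) (use Ytri Ydiag that in auto)
    thus ?thesis using L that by simp
  qed
  have Mt: "(if 0 < j then ths (j-1) * (y (j-1) * Y (j-1) j) else 0) + (if j < d then ths (j+1) * (y (j+1) * Y (j+1) j) else 0)
        = t1 * ths j * y j + \<kappa> * y j" if "j \<le> d" for j
  proof -
    have "(\<Sum>i\<le>d. y i * ths i * Y i j) = (if 0 < j then y (j-1) * ths (j-1) * Y (j-1) j else 0) + (if j < d then y (j+1) * ths (j+1) * Y (j+1) j else 0)"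
      by (rule tri_sum[OF that]) (use Ytri Ydiag that in auto)
    thus ?thesis using M that by (simp add: ac_simps)
  qed
  have thd: "ths a \<noteq> ths b" if "a \<le> d" "b \<le> d" "a \<noteq> b" for a b
    using inj that unfolding inj_on_def by auto
  have fwd: "y 0 = 0 \<Longrightarrow> \<forall>k\<le>d. y k = 0"
  proof -
    assume y0: "y 0 = 0"
    have "\<forall>k. k + 1 \<le> d \<longrightarrow> y k = 0 \<and> y (k+1) = 0"
    proof
      fix k show "k + 1 \<le> d \<longrightarrow> y k = 0 \<and> y (k+1) = 0"
      proof (induction k)
        case 0
        have "y 1 * Y 1 0 = t0 * y 0" using Lt[of 0] d1 by simp
        then show ?case using y0 Ynz d1 by auto
      next
        case (Suc k)
        show ?case
        proof
          assume h: "Suc k + 1 \<le> d"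
          with Suc have a: "y k = 0" "y (k+1) = 0" by auto
          have "y k * Y k (k+1) + y (k+2) * Y (k+2) (k+1) = t0 * y (k+1)"
            using Lt[of "k+1"] h by simp
          with a have "y (k+2) * Y (k+2) (k+1) = 0" by simp
          moreover have "Y (k+2) (k+1) \<noteq> 0" using Ynz[rule_format, of "Suc k"] h by simp
          ultimately show "y (Suc k) = 0 \<and> y (Suc k + 1) = 0" using a by simp
        qed
      qed
    qed
    show ?thesis
    proof (intro allI impI)
      fix k assume "k \<le> d"
      show "y k = 0"
      proof (cases k)
        case 0 thus ?thesis using y0 by simp
      next
        case (Suc m) thus ?thesis using \<open>\<forall>k. k + 1 \<le> d \<longrightarrow> y k = 0 \<and> y (k+1) = 0\<close> \<open>k \<le> d\<close> by auto
      qed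
    qed
  qed
  have y0nz: "y 0 \<noteq> 0" using fwd ynz by auto
  have kap: "\<kappa> = t0 * ths 1 - t1 * ths 0"
  proof -
    have a: "y 1 * Y 1 0 = t0 * y 0" using Lt[of 0] d1 by simp
    have b: "ths 1 * (y 1 * Y 1 0) = t1 * ths 0 * y 0 + \<kappa> * y 0" using Mt[of 0] d1 by simp
    from a b have "\<kappa> * y 0 = (t0 * ths 1 - t1 * ths 0) * y 0" by (simp add: algebra_simps)
    thus ?thesis using y0nz by simp
  qed
  have PQ: "y (j-1) * Y (j-1) j + y (j+1) * Y (j+1) j = t0 * y j"
    "ths (j-1) * (y (j-1) * Y (j-1) j) + ths (j+1) * (y (j+1) * Y (j+1) j) = t1 * ths j * y j + \<kappa> * y j"
    if "1 \<le> j" "j + 1 \<le> d" for j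
    using Lt[of j] Mt[of j] that by auto
  have Qrel: "(ths (j+1) - ths (j-1)) * (y (j+1) * Y (j+1) j) = (t1 * (ths j - ths 0) + t0 * (ths 1 - ths (j-1))) * y j"
    if "1 \<le> j" "j + 1 \<le> d" for j
  proof -
    have "(ths (j+1) - ths (j-1)) * (y (j+1) * Y (j+1) j) = (t1 * ths j * y j + \<kappa> * y j) - ths (j-1) * (t0 * y j)"
      using lin_aux(1)[OF PQ(1)[OF that] PQ(2)[OF that]] .
    thus ?thesis unfolding kap by (simp add: algebra_simps)
  qed
  have Prel: "(ths (j-1) - ths (j+1)) * (y (j-1) * Y (j-1) j) = (t1 * (ths j - ths 0) + t0 * (ths 1 - ths (j+1))) * y j"
    if "1 \<le> j" "j + 1 \<le> d" for j
  proof -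
    have "(ths (j-1) - ths (j+1)) * (y (j-1) * Y (j-1) j) = (t1 * ths j * y j + \<kappa> * y j) - ths (j+1) * (t0 * y j)"
      using lin_aux(2)[OF PQ(1)[OF that] PQ(2)[OF that]] .
    thus ?thesis unfolding kap by (simp add: algebra_simps)
  qed
  have down: "y (k-1) = 0" if "1 \<le> k" "k \<le> d" "y k = 0" for k
  proof (cases "k = d")
    case True
    have "y (k-1) * Y (k-1) k = t0 * y k" using Lt[of k] that True by simp
    moreover have "Y (k-1) k \<noteq> 0" using Ynz[rule_format, of "k-1"] that by simp
    ultimately show ?thesis using that by simp
  next
    case False
    hence k1: "k + 1 \<le> d" using that by simp
    have "(ths (k-1) - ths (k+1)) * (y (k-1) * Y (k-1) k) = 0" using Prel[OF that(1) k1] that by simp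
    moreover have "ths (k-1) \<noteq> ths (k+1)" using thd[of "k-1" "k+1"] k1 by simp
    moreover have "Y (k-1) k \<noteq> 0" using Ynz[rule_format, of "k-1"] that by simp
    ultimately show ?thesis by simp
  qed
  have down_all: "k \<le> d \<Longrightarrow> y k = 0 \<Longrightarrow> y 0 = 0" for k
  proof (induction k)
    case 0 thus ?case by simp
  next
    case (Suc k)
    have "y k = 0" using down[of "Suc k"] Suc.prems by simp
    thus ?case using Suc by simp
  qed
  show ?thesis
  proof (intro allI impI conjI)
    fix i assume i: "1 \<le> i \<and> i \<le> d - 1"
    hence i1: "1 \<le> i" "i + 1 \<le> d" by auto
    have nz: "ths i - ths 0 \<noteq> 0" using thd[of i 0] i1 by simp
    show "t0 * ((ths (i-1) - ths 1) / (ths i - ths 0)) \<noteq> t1"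
    proof
      assume "t0 * ((ths (i-1) - ths 1) / (ths i - ths 0)) = t1"
      hence e: "t0 * (ths (i-1) - ths 1) = t1 * (ths i - ths 0)" using nz by (simp add: field_simps)
      have z: "t1 * (ths i - ths 0) + t0 * (ths 1 - ths (i-1)) = 0" using e by (simp add: algebra_simps)
      have "(ths (i+1) - ths (i-1)) * (y (i+1) * Y (i+1) i) = 0"
        using Qrel[OF i1] unfolding z by simp
      moreover have "ths (i+1) \<noteq> ths (i-1)" using thd[of "i+1" "i-1"] i1 by simp
      moreover have "Y (i+1) i \<noteq> 0" using Ynz i1 by simp
      ultimately have "y (i+1) = 0" by simp
      thus False using down_all[of "i+1"] i1 y0nz by simp
    qed
    show "t0 * ((ths (i+1) - ths 1) / (ths i - ths 0)) \<noteq> t1"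
    proof
      assume "t0 * ((ths (i+1) - ths 1) / (ths i - ths 0)) = t1"
      hence e: "t0 * (ths (i+1) - ths 1) = t1 * (ths i - ths 0)" using nz by (simp add: field_simps)
      have z: "t1 * (ths i - ths 0) + t0 * (ths 1 - ths (i+1)) = 0" using e by (simp add: algebra_simps)
      have "(ths (i-1) - ths (i+1)) * (y (i-1) * Y (i-1) i) = 0"
        using Prel[OF i1] unfolding z by simp
      moreover have "ths (i+1) \<noteq> ths (i-1)" using thd[of "i+1" "i-1"] i1 by simp
      moreover have "Y (i-1) i \<noteq> 0" using Ynz[rule_format, of "i-1"] i1 by simp
      ultimately have "y (i-1) = 0" by simp
      thus False using down_all[of "i-1"] i1 y0nz by linarith
    qed
  qed
qed


lemma finsum_vec_vec:
  assumes "finite J" "\<And>j. j \<in> J \<Longrightarrow> f j \<in> carrier_vec n"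
  shows "finsum_vec TYPE('a::comm_monoid_add) n f J = vec n (\<lambda>r. \<Sum>j\<in>J. f j $ r)"
proof -
  have c: "finsum_vec TYPE('a) n f J \<in> carrier_vec n"
    using finsum_vec_closed[of f J n] assms by auto
  show ?thesis
    by (rule eq_vecI) (use c assms in \<open>auto simp: index_finsum_vec\<close>)
qed

lemma sum_mult_mat_vec:
  fixes A :: "'a::comm_ring_1 mat"
  assumes A: "A \<in> carrier_mat m n" and r: "r < m" and w: "\<forall>j\<in>J. w j \<in> carrier_vec n"
  shows "(\<Sum>j\<in>J. (A *\<^sub>v w j) $ r) = (\<Sum>c<n. A $$ (r,c) * (\<Sum>j\<in>J. w j $ c))"
proof -
  have "(\<Sum>j\<in>J. (A *\<^sub>v w j) $ r) = (\<Sum>j\<in>J. \<Sum>c<n. A $$ (r,c) * w j $ c)"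
    using A r w by (intro sum.cong) (auto simp: scalar_prod_def atLeast0LessThan)
  also have "\<dots> = (\<Sum>c<n. \<Sum>j\<in>J. A $$ (r,c) * w j $ c)" by (rule sum.swap)
  also have "\<dots> = (\<Sum>c<n. A $$ (r,c) * (\<Sum>j\<in>J. w j $ c))" by (simp add: sum_distrib_left)
  finally show ?thesis .
qed

lemma eig_indep:
  fixes A :: "'a::field mat" and th :: "nat \<Rightarrow> 'a"
  assumes A: "A \<in> carrier_mat n n" and fin: "finite J"
  shows "inj_on th J \<Longrightarrow> \<forall>j\<in>J. w j \<in> carrier_vec n \<and> A *\<^sub>v w j = th j \<cdot>\<^sub>v w j
    \<Longrightarrow> \<forall>r<n. (\<Sum>j\<in>J. w j $ r) = 0 \<Longrightarrow> \<forall>j\<in>J. w j = 0\<^sub>v n"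
  using fin
proof (induction J arbitrary: w rule: finite_induct)
  case empty thus ?case by simp
next
  case (insert k J)
  note inj = insert.prems(1) and wp = insert.prems(2) and s = insert.prems(3)
  define w' where "w' j = (th j - th k) \<cdot>\<^sub>v w j" for j
  have s1: "w k $ r + (\<Sum>j\<in>J. w j $ r) = 0" if "r < n" for r
    using s that insert.hyps by simp
  have s2: "th k * w k $ r + (\<Sum>j\<in>J. th j * w j $ r) = 0" if r: "r < n" for r
  proof -
    have "(\<Sum>j\<in>insert k J. (A *\<^sub>v w j) $ r) = (\<Sum>c<n. A $$ (r,c) * (\<Sum>j\<in>insert k J. w j $ c))"
      by (rule sum_mult_mat_vec[OF A r]) (use wp in auto)
    also have "\<dots> = 0" using s by simp
    finally have "(\<Sum>j\<in>insert k J. (A *\<^sub>v w j) $ r) = 0" .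
    moreover have "(A *\<^sub>v w j) $ r = th j * w j $ r" if "j \<in> insert k J" for j
      using wp that r by auto
    ultimately show ?thesis using insert.hyps by simp
  qed
  have "\<forall>j\<in>J. w' j = 0\<^sub>v n"
  proof (rule insert.IH)
    show "inj_on th J" using inj by auto
    show "\<forall>j\<in>J. w' j \<in> carrier_vec n \<and> A *\<^sub>v w' j = th j \<cdot>\<^sub>v w' j"
      using wp A unfolding w'_def by (auto simp: mult_mat_vec smult_smult_assoc ac_simps)
    show "\<forall>r<n. (\<Sum>j\<in>J. w' j $ r) = 0"
    proof (intro allI impI)
      fix r assume r: "r < n"
      have "(\<Sum>j\<in>J. w' j $ r) = (\<Sum>j\<in>J. th j * w j $ r) - th k * (\<Sum>j\<in>J. w j $ r)"
      proof -
        have "(\<Sum>j\<in>J. w' j $ r) = (\<Sum>j\<in>J. (th j - th k) * w j $ r)"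
          using wp r unfolding w'_def by (intro sum.cong) auto
        also have "\<dots> = (\<Sum>j\<in>J. th j * w j $ r - th k * w j $ r)" by (simp add: left_diff_distrib)
        also have "\<dots> = (\<Sum>j\<in>J. th j * w j $ r) - th k * (\<Sum>j\<in>J. w j $ r)"
          by (simp add: sum_subtractf sum_distrib_left)
        finally show ?thesis .
      qed
      also have "\<dots> = 0"
      proof -
        have e1: "- w k $ r = (\<Sum>j\<in>J. w j $ r)" using s1[OF r] neg_eq_iff_add_eq_0 by blast
        have e2: "- (th k * w k $ r) = (\<Sum>j\<in>J. th j * w j $ r)" using s2[OF r] neg_eq_iff_add_eq_0 by blast
        show ?thesis unfolding e1[symmetric] e2[symmetric] by simp
      qed
      finally show "(\<Sum>j\<in>J. w' j $ r) = 0" .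
    qed
  qed
  hence wJ: "\<forall>j\<in>J. w j = 0\<^sub>v n"
  proof (intro ballI)
    fix j assume j: "j \<in> J" and h: "\<forall>j\<in>J. w' j = 0\<^sub>v n"
    have ne: "th j - th k \<noteq> 0" using inj j insert.hyps unfolding inj_on_def by force
    show "w j = 0\<^sub>v n"
    proof (rule eq_vecI)
      fix r assume "r < dim_vec (0\<^sub>v n :: 'a vec)"
      hence r: "r < n" by simp
      have "w' j $ r = 0" using h j r by simp
      hence "(th j - th k) * w j $ r = 0" using wp j r unfolding w'_def by auto
      thus "w j $ r = 0\<^sub>v n $ r" using ne r by simp
    qed (use wp j in auto)
  qed
  moreover have "w k = 0\<^sub>v n"
  proof (rule eq_vecI)
    fix r assume "r < dim_vec (0\<^sub>v n :: 'a vec)"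
    hence r: "r < n" by simp
    have "(\<Sum>j\<in>J. w j $ r) = 0" using wJ r by simp
    thus "w k $ r = 0\<^sub>v n $ r" using s1[OF r] r by simp
  qed (use wp in auto)
  ultimately show ?case by auto
qed


lemma mat_eq_vecI:
  fixes X Y :: "'a::comm_ring_1 mat"
  assumes X: "X \<in> carrier_mat n m" and Y: "Y \<in> carrier_mat n m"
    and h: "\<And>w. w \<in> carrier_vec m \<Longrightarrow> X *\<^sub>v w = Y *\<^sub>v w"
  shows "X = Y"
proof (rule eq_matI)
  fix i j assume i: "i < dim_row Y" and j: "j < dim_col Y"
  have "X *\<^sub>v unit_vec m j = Y *\<^sub>v unit_vec m j" by (rule h) simp
  hence "(X *\<^sub>v unit_vec m j) $ i = (Y *\<^sub>v unit_vec m j) $ i" by simp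
  thus "X $$ (i, j) = Y $$ (i, j)" using X Y i j by simp
qed (use X Y in auto)

lemma smult_mat_vec:
  fixes X :: "'a::comm_ring_1 mat"
  assumes "X \<in> carrier_mat n m" "w \<in> carrier_vec m"
  shows "(c \<cdot>\<^sub>m X) *\<^sub>v w = c \<cdot>\<^sub>v (X *\<^sub>v w)"
  by (rule eq_vecI) (use assms in \<open>auto simp: scalar_prod_def sum_distrib_left ac_simps\<close>)

lemma eig_iff:
  assumes "A \<in> carrier_mat n n"
  shows "x \<in> eigenspace_of A t \<longleftrightarrow> x \<in> carrier_vec n \<and> A *\<^sub>v x = t \<cdot>\<^sub>v x"
  using assms unfolding eigenspace_of_def by auto

lemma eig_sub:
  fixes A :: "'a::comm_ring_1 mat"
  assumes A: "A \<in> carrier_mat n n" and x: "x \<in> carrier_vec n" and y: "y \<in> carrier_vec n"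
    and Ax: "A *\<^sub>v x = t \<cdot>\<^sub>v x" and Ay: "A *\<^sub>v y = t \<cdot>\<^sub>v y"
  shows "A *\<^sub>v (x - y) = t \<cdot>\<^sub>v (x - y)"
proof -
  have "A *\<^sub>v (x - y) = A *\<^sub>v x - A *\<^sub>v y" by (rule mult_minus_distrib_mat_vec[OF A x y])
  also have "\<dots> = t \<cdot>\<^sub>v (x - y)" unfolding Ax Ay
    by (rule eq_vecI) (use x y in \<open>auto simp: algebra_simps\<close>)
  finally show ?thesis .
qed

lemma mat_vec_idx:
  assumes "A \<in> carrier_mat m n" "x \<in> carrier_vec n" "r < m"
  shows "(A *\<^sub>v x) $ r = (\<Sum>c<n. A $$ (r,c) * x $ c)"
  using assms by (simp add: scalar_prod_def atLeast0LessThan)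

lemma idx_smult:
  assumes "v \<in> carrier_vec n" "i < n"
  shows "(c \<cdot>\<^sub>v v) $ i = c * v $ i"
  using assms by auto

lemma idx_minus:
  assumes "v2 \<in> carrier_vec n" "i < n"
  shows "(v1 - v2) $ i = v1 $ i - v2 $ i"
  using assms by (intro index_minus_vec(1)) auto

lemma vec_sub_eq0:
  fixes x :: "'a::ab_group_add vec"
  assumes "x \<in> carrier_vec n" "y \<in> carrier_vec n" "x - y = 0\<^sub>v n"
  shows "x = y"
proof (rule eq_vecI)
  fix i assume i: "i < dim_vec y"
  have i': "i < n" using i assms by simp
  have "(x - y) $ i = 0\<^sub>v n $ i" using assms(3) by simp
  moreover have "(x - y) $ i = x $ i - y $ i" using assms(2) i' by (rule idx_minus)
  moreover have "0\<^sub>v n $ i = (0::'a)" using i' by simp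
  ultimately show "x $ i = y $ i" by simp
qed (use assms in auto)

context
  fixes d :: nat and A :: "'a::field mat" and th :: "nat \<Rightarrow> 'a" and E :: "nat \<Rightarrow> 'a mat"
  assumes A: "A \<in> carrier_mat (d+1) (d+1)" and mf: "mult_free_with d A th E"
begin

lemma Ecar: "j \<le> d \<Longrightarrow> E j \<in> carrier_mat (d+1) (d+1)"
  using mf unfolding mult_free_with_def by auto

lemma th_inj: "inj_on th {0..d}" using mf unfolding mult_free_with_def by auto

lemma Edecomp:
  assumes j: "j \<le> d" and w: "w \<in> carrier_vec (d+1)"
  shows "E j *\<^sub>v w \<in> eigenspace_of A (th j)"
    "\<exists>u. (\<forall>l\<in>{0..d}-{j}. u l \<in> eigenspace_of A (th l)) \<and>
         (\<forall>r<d+1. w $ r = (E j *\<^sub>v w) $ r + (\<Sum>l\<in>{0..d}-{j}. u l $ r))"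
proof -
  from mf j w have a: "E j *\<^sub>v w \<in> eigenspace_of A (th j)"
    and b: "w - E j *\<^sub>v w \<in> eigenspace_sum A th ({0..d} - {j})"
    unfolding mult_free_with_def by auto
  show "E j *\<^sub>v w \<in> eigenspace_of A (th j)" by fact
  from b obtain u where u: "\<forall>l\<in>{0..d}-{j}. u l \<in> eigenspace_of A (th l)"
    and eq: "w - E j *\<^sub>v w = finsum_vec TYPE('a) (dim_row A) u ({0..d}-{j})"
    unfolding eigenspace_sum_def by auto
  have uc: "\<And>l. l \<in> {0..d}-{j} \<Longrightarrow> u l \<in> carrier_vec (d+1)"
    using u eig_iff[OF A] by blast
  have fv: "finsum_vec TYPE('a) (d+1) u ({0..d}-{j}) = vec (d+1) (\<lambda>r. \<Sum>l\<in>{0..d}-{j}. u l $ r)"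
    by (rule finsum_vec_vec) (use uc in auto)
  have "w - E j *\<^sub>v w = vec (d+1) (\<lambda>r. \<Sum>l\<in>{0..d}-{j}. u l $ r)"
    using eq A fv by simp
  hence "\<forall>r<d+1. w $ r = (E j *\<^sub>v w) $ r + (\<Sum>l\<in>{0..d}-{j}. u l $ r)"
  proof (intro allI impI)
    fix r assume h: "w - E j *\<^sub>v w = vec (d+1) (\<lambda>r. \<Sum>l\<in>{0..d}-{j}. u l $ r)" and r: "r < d+1"
    have "(w - E j *\<^sub>v w) $ r = (\<Sum>l\<in>{0..d}-{j}. u l $ r)" using h r by simp
    moreover have "(w - E j *\<^sub>v w) $ r = w $ r - (E j *\<^sub>v w) $ r"
      using r w Ecar[OF j] by simp
    ultimately show "w $ r = (E j *\<^sub>v w) $ r + (\<Sum>l\<in>{0..d}-{j}. u l $ r)" by (simp add: algebra_simps)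
  qed
  thus "\<exists>u. (\<forall>l\<in>{0..d}-{j}. u l \<in> eigenspace_of A (th l)) \<and>
         (\<forall>r<d+1. w $ r = (E j *\<^sub>v w) $ r + (\<Sum>l\<in>{0..d}-{j}. u l $ r))" using u by blast
qed

lemma G_core:
  assumes j: "j \<le> d" and z: "z \<in> eigenspace_of A (th j)"
    and u: "\<forall>l\<in>{0..d}-{j}. u l \<in> eigenspace_of A (th l)"
    and s: "\<forall>r<d+1. z $ r = (\<Sum>l\<in>{0..d}-{j}. u l $ r)"
  shows "z = 0\<^sub>v (d+1)"
proof -
  define w where "w = u(j := - z)"
  have jin: "j \<in> {0..d}" using j by simp
  have "\<forall>l\<in>{0..d}. w l = 0\<^sub>v (d+1)"
  proof (rule eig_indep[OF A, of "{0..d}" th w])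
    show "inj_on th {0..d}" by (rule th_inj)
    show "\<forall>l\<in>{0..d}. w l \<in> carrier_vec (d+1) \<and> A *\<^sub>v w l = th l \<cdot>\<^sub>v w l"
    proof -
      have zc: "z \<in> carrier_vec (d+1)" and Az: "A *\<^sub>v z = th j \<cdot>\<^sub>v z" using z unfolding eig_iff[OF A] by auto
      have "A *\<^sub>v (- z) = th j \<cdot>\<^sub>v (- z)"
      proof (rule eq_vecI)
        fix i assume i: "i < dim_vec (th j \<cdot>\<^sub>v (- z))"
        have "(A *\<^sub>v (- z)) $ i = - ((A *\<^sub>v z) $ i)"
          using A zc i by (simp add: scalar_prod_def sum_negf)
        also have "\<dots> = (th j \<cdot>\<^sub>v (- z)) $ i" using Az i zc by simp
        finally show "(A *\<^sub>v (- z)) $ i = (th j \<cdot>\<^sub>v (- z)) $ i" .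
      qed (use A zc in auto)
      thus ?thesis using zc u unfolding w_def eig_iff[OF A] by auto
    qed
    show "\<forall>r<d+1. (\<Sum>l\<in>{0..d}. w l $ r) = 0"
    proof (intro allI impI)
      fix r assume r: "r < d+1"
      have "(\<Sum>l\<in>{0..d}. w l $ r) = w j $ r + (\<Sum>l\<in>{0..d}-{j}. w l $ r)"
        using jin by (simp add: sum.remove)
      also have "(\<Sum>l\<in>{0..d}-{j}. w l $ r) = (\<Sum>l\<in>{0..d}-{j}. u l $ r)"
        unfolding w_def by (intro sum.cong) auto
      also have "w j $ r = - z $ r" using z r unfolding w_def eig_iff[OF A] by (auto simp: carrier_vecD)
      finally show "(\<Sum>l\<in>{0..d}. w l $ r) = 0" using s r by simp
    qed
  qed simp
  hence "w j = 0\<^sub>v (d+1)" using jin by blast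
  hence "- z = 0\<^sub>v (d+1)" unfolding w_def by simp
  thus ?thesis using z unfolding eig_iff[OF A]
    by (metis carrier_vecD uminus_uminus_vec uminus_zero_vec_eq)
qed


lemma G1a:
  assumes j: "j \<le> d" and w: "w \<in> eigenspace_of A (th j)"
  shows "E j *\<^sub>v w = w"
proof -
  have wc: "w \<in> carrier_vec (d+1)" and Aw: "A *\<^sub>v w = th j \<cdot>\<^sub>v w" using w eig_iff[OF A] by auto
  note ED = Edecomp[OF j wc]
  obtain u where u: "\<forall>l\<in>{0..d}-{j}. u l \<in> eigenspace_of A (th l)"
    and s: "\<forall>r<d+1. w $ r = (E j *\<^sub>v w) $ r + (\<Sum>l\<in>{0..d}-{j}. u l $ r)" using ED(2) by blast
  have ec: "E j *\<^sub>v w \<in> carrier_vec (d+1)" and Ae: "A *\<^sub>v (E j *\<^sub>v w) = th j \<cdot>\<^sub>v (E j *\<^sub>v w)"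
    using ED(1) eig_iff[OF A] by auto
  have zc: "w - E j *\<^sub>v w \<in> eigenspace_of A (th j)"
    unfolding eig_iff[OF A] using eig_sub[OF A wc ec Aw Ae] wc ec by auto
  have "w - E j *\<^sub>v w = 0\<^sub>v (d+1)"
  proof (rule G_core[OF j zc u])
    show "\<forall>r<d+1. (w - E j *\<^sub>v w) $ r = (\<Sum>l\<in>{0..d}-{j}. u l $ r)"
    proof (intro allI impI)
      fix r assume r: "r < d+1"
      have "(w - E j *\<^sub>v w) $ r = w $ r - (E j *\<^sub>v w) $ r" using ec r by (intro idx_minus) auto
      thus "(w - E j *\<^sub>v w) $ r = (\<Sum>l\<in>{0..d}-{j}. u l $ r)" using s r by simp
    qed
  qed
  thus ?thesis using wc ec vec_sub_eq0 by metis
qed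

lemma G2:
  assumes j: "j \<le> d" and L: "L \<subseteq> {0..d} - {j}"
    and z: "\<forall>l\<in>L. z l \<in> eigenspace_of A (th l)"
  shows "E j *\<^sub>v vec (d+1) (\<lambda>r. \<Sum>l\<in>L. z l $ r) = 0\<^sub>v (d+1)"
proof -
  let ?x = "vec (d+1) (\<lambda>r. \<Sum>l\<in>L. z l $ r)"
  have xc: "?x \<in> carrier_vec (d+1)" by simp
  note ED = Edecomp[OF j xc]
  obtain u where u: "\<forall>l\<in>{0..d}-{j}. u l \<in> eigenspace_of A (th l)"
    and s: "\<forall>r<d+1. ?x $ r = (E j *\<^sub>v ?x) $ r + (\<Sum>l\<in>{0..d}-{j}. u l $ r)" using ED(2) by blast
  define z' where "z' l = (if l \<in> L then z l else 0\<^sub>v (d+1))" for l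
  define u' where "u' l = z' l - u l" for l
  have zc: "\<forall>l\<in>L. z l \<in> carrier_vec (d+1) \<and> A *\<^sub>v z l = th l \<cdot>\<^sub>v z l" using z eig_iff[OF A] by auto
  have uc: "\<forall>l\<in>{0..d}-{j}. u l \<in> carrier_vec (d+1) \<and> A *\<^sub>v u l = th l \<cdot>\<^sub>v u l" using u eig_iff[OF A] by auto
  have u': "\<forall>l\<in>{0..d}-{j}. u' l \<in> eigenspace_of A (th l)"
  proof
    fix l assume l: "l \<in> {0..d}-{j}"
    have zc': "z' l \<in> carrier_vec (d+1)" "A *\<^sub>v z' l = th l \<cdot>\<^sub>v z' l"
      using zc A unfolding z'_def by auto
    show "u' l \<in> eigenspace_of A (th l)"
      unfolding eig_iff[OF A] u'_def using eig_sub[OF A zc'(1) _ zc'(2), of "u l"] uc l zc'(1) by auto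
  qed
  have "E j *\<^sub>v ?x = 0\<^sub>v (d+1)"
  proof (rule G_core[OF j ED(1) u'])
    show "\<forall>r<d+1. (E j *\<^sub>v ?x) $ r = (\<Sum>l\<in>{0..d}-{j}. u' l $ r)"
    proof (intro allI impI)
      fix r assume r: "r < d+1"
      have "(\<Sum>l\<in>{0..d}-{j}. u' l $ r) = (\<Sum>l\<in>{0..d}-{j}. z' l $ r) - (\<Sum>l\<in>{0..d}-{j}. u l $ r)"
        unfolding u'_def sum_subtractf[symmetric] using uc r by (intro sum.cong refl idx_minus) auto
      also have "(\<Sum>l\<in>{0..d}-{j}. z' l $ r) = (\<Sum>l\<in>L. z l $ r)"
      proof -
        have "(\<Sum>l\<in>{0..d}-{j}. z' l $ r) = (\<Sum>l\<in>L. z' l $ r)"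
          by (rule sum.mono_neutral_right) (use L r in \<open>auto simp: z'_def\<close>)
        also have "\<dots> = (\<Sum>l\<in>L. z l $ r)" by (auto simp: z'_def)
        finally show ?thesis .
      qed
      finally show "(E j *\<^sub>v ?x) $ r = (\<Sum>l\<in>{0..d}-{j}. u' l $ r)"
        using s r by (simp add: algebra_simps)
    qed
  qed
  thus ?thesis .
qed


lemma Aw_decomp:
  assumes w: "w \<in> carrier_vec (d+1)"
  shows "\<exists>u. (\<forall>l\<in>{0..d}-{0}. u l \<in> eigenspace_of A (th l)) \<and>
    (\<forall>t. A *\<^sub>v w = t \<cdot>\<^sub>v w + (th 0 - t) \<cdot>\<^sub>v (E 0 *\<^sub>v w)
          + vec (d+1) (\<lambda>r. \<Sum>l\<in>{0..d}-{0}. ((th l - t) \<cdot>\<^sub>v u l) $ r))"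
proof -
  note ED = Edecomp[OF _ w, of 0]
  obtain u where u: "\<forall>l\<in>{0..d}-{0}. u l \<in> eigenspace_of A (th l)"
    and s: "\<forall>r<d+1. w $ r = (E 0 *\<^sub>v w) $ r + (\<Sum>l\<in>{0..d}-{0}. u l $ r)" using ED(2) by auto
  have ec: "E 0 *\<^sub>v w \<in> carrier_vec (d+1)" and Ae: "A *\<^sub>v (E 0 *\<^sub>v w) = th 0 \<cdot>\<^sub>v (E 0 *\<^sub>v w)"
    using ED(1) eig_iff[OF A] by auto
  have uc: "\<forall>l\<in>{0..d}-{0}. u l \<in> carrier_vec (d+1) \<and> A *\<^sub>v u l = th l \<cdot>\<^sub>v u l"
    using u eig_iff[OF A] by auto
  have "A *\<^sub>v w = t \<cdot>\<^sub>v w + (th 0 - t) \<cdot>\<^sub>v (E 0 *\<^sub>v w)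
          + vec (d+1) (\<lambda>r. \<Sum>l\<in>{0..d}-{0}. ((th l - t) \<cdot>\<^sub>v u l) $ r)" for t
  proof (rule eq_vecI)
    fix r assume "r < dim_vec (t \<cdot>\<^sub>v w + (th 0 - t) \<cdot>\<^sub>v (E 0 *\<^sub>v w)
          + vec (d+1) (\<lambda>r. \<Sum>l\<in>{0..d}-{0}. ((th l - t) \<cdot>\<^sub>v u l) $ r))"
    hence r: "r < d+1" by simp
    let ?e = "E 0 *\<^sub>v w"
    have "(A *\<^sub>v w) $ r = (\<Sum>c<d+1. A $$ (r,c) * w $ c)"
      by (rule mat_vec_idx[OF A w r])
    also have "\<dots> = (\<Sum>c<d+1. A $$ (r,c) * ?e $ c) + (\<Sum>c<d+1. A $$ (r,c) * (\<Sum>l\<in>{0..d}-{0}. u l $ c))"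
      using s by (simp add: distrib_left sum.distrib)
    also have "(\<Sum>c<d+1. A $$ (r,c) * ?e $ c) = (A *\<^sub>v ?e) $ r"
      by (rule mat_vec_idx[OF A ec r, symmetric])
    also have "(\<Sum>c<d+1. A $$ (r,c) * (\<Sum>l\<in>{0..d}-{0}. u l $ c)) = (\<Sum>l\<in>{0..d}-{0}. (A *\<^sub>v u l) $ r)"
      by (rule sum_mult_mat_vec[OF A r, symmetric]) (use uc in auto)
    also have "\<dots> = (\<Sum>l\<in>{0..d}-{0}. th l * u l $ r)"
    proof (rule sum.cong[OF refl])
      fix l assume "l \<in> {0..d}-{0}"
      hence "u l \<in> carrier_vec (d+1)" "A *\<^sub>v u l = th l \<cdot>\<^sub>v u l" using uc by auto
      thus "(A *\<^sub>v u l) $ r = th l * u l $ r" using r by (simp add: idx_smult)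
    qed
    also have "(A *\<^sub>v ?e) $ r = th 0 * ?e $ r" unfolding Ae using ec r by (rule idx_smult)
    finally have L: "(A *\<^sub>v w) $ r = th 0 * ?e $ r + (\<Sum>l\<in>{0..d}-{0}. th l * u l $ r)" .
    have R: "(t \<cdot>\<^sub>v w + (th 0 - t) \<cdot>\<^sub>v ?e + vec (d+1) (\<lambda>r. \<Sum>l\<in>{0..d}-{0}. ((th l - t) \<cdot>\<^sub>v u l) $ r)) $ r
        = t * w $ r + (th 0 - t) * ?e $ r + (\<Sum>l\<in>{0..d}-{0}. (th l - t) * u l $ r)"
    proof -
      have "(\<Sum>l\<in>{0..d}-{0}. ((th l - t) \<cdot>\<^sub>v u l) $ r) = (\<Sum>l\<in>{0..d}-{0}. (th l - t) * u l $ r)"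
      proof (rule sum.cong[OF refl])
        fix l assume "l \<in> {0..d}-{0}"
        hence "u l \<in> carrier_vec (d+1)" using uc by auto
        thus "((th l - t) \<cdot>\<^sub>v u l) $ r = (th l - t) * u l $ r" using r by (simp add: idx_smult)
      qed
      thus ?thesis using w ec r by (simp add: idx_smult[OF ec r] idx_smult[OF w r])
    qed
    have "(\<Sum>l\<in>{0..d}-{0}. (th l - t) * u l $ r) = (\<Sum>l\<in>{0..d}-{0}. th l * u l $ r) - t * (\<Sum>l\<in>{0..d}-{0}. u l $ r)"
      by (simp add: left_diff_distrib sum_subtractf sum_distrib_left)
    thus "(A *\<^sub>v w) $ r = (t \<cdot>\<^sub>v w + (th 0 - t) \<cdot>\<^sub>v ?e + vec (d+1) (\<lambda>r. \<Sum>l\<in>{0..d}-{0}. ((th l - t) \<cdot>\<^sub>v u l) $ r)) $ r"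
      unfolding L R using s r by (simp add: algebra_simps)
  qed (use w ec A in auto)
  thus ?thesis using u by blast
qed

lemma M1: "A * E 0 = th 0 \<cdot>\<^sub>m E 0"
proof (rule mat_eq_vecI)
  show "A * E 0 \<in> carrier_mat (d+1) (d+1)" using A Ecar[of 0] by auto
  show "th 0 \<cdot>\<^sub>m E 0 \<in> carrier_mat (d+1) (d+1)" using Ecar[of 0] by auto
  fix w :: "'a vec" assume w: "w \<in> carrier_vec (d+1)"
  have "A *\<^sub>v (E 0 *\<^sub>v w) = th 0 \<cdot>\<^sub>v (E 0 *\<^sub>v w)" using Edecomp(1)[OF _ w, of 0] eig_iff[OF A] by auto
  thus "(A * E 0) *\<^sub>v w = (th 0 \<cdot>\<^sub>m E 0) *\<^sub>v w"
    using A Ecar[of 0] w by (simp add: smult_mat_vec)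
qed

lemma E0E0: "w \<in> carrier_vec (d+1) \<Longrightarrow> E 0 *\<^sub>v (E 0 *\<^sub>v w) = E 0 *\<^sub>v w"
  using G1a[of 0 "E 0 *\<^sub>v w"] Edecomp(1)[of 0 w] by auto

lemma M2: "E 0 * A = th 0 \<cdot>\<^sub>m E 0"
proof (rule mat_eq_vecI)
  show "E 0 * A \<in> carrier_mat (d+1) (d+1)" using A Ecar[of 0] by auto
  show "th 0 \<cdot>\<^sub>m E 0 \<in> carrier_mat (d+1) (d+1)" using Ecar[of 0] by auto
  fix w :: "'a vec" assume w: "w \<in> carrier_vec (d+1)"
  obtain u where u: "\<forall>l\<in>{0..d}-{0}. u l \<in> eigenspace_of A (th l)"
    and D: "\<And>t. A *\<^sub>v w = t \<cdot>\<^sub>v w + (th 0 - t) \<cdot>\<^sub>v (E 0 *\<^sub>v w)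
          + vec (d+1) (\<lambda>r. \<Sum>l\<in>{0..d}-{0}. ((th l - t) \<cdot>\<^sub>v u l) $ r)"
    using Aw_decomp[OF w] by blast
  let ?z = "vec (d+1) (\<lambda>r. \<Sum>l\<in>{0..d}-{0}. ((th l - th 0) \<cdot>\<^sub>v u l) $ r)"
  have z0: "E 0 *\<^sub>v ?z = 0\<^sub>v (d+1)"
  proof (rule G2)
    show "\<forall>l\<in>{0..d}-{0}. (th l - th 0) \<cdot>\<^sub>v u l \<in> eigenspace_of A (th l)"
      using u A unfolding eig_iff[OF A] by (auto simp: mult_mat_vec smult_smult_assoc mult.commute)
  qed auto
  have ec: "E 0 *\<^sub>v w \<in> carrier_vec (d+1)" using Ecar[of 0] w by auto
  have "E 0 *\<^sub>v (A *\<^sub>v w) = E 0 *\<^sub>v (th 0 \<cdot>\<^sub>v w) + (E 0 *\<^sub>v ((th 0 - th 0) \<cdot>\<^sub>v (E 0 *\<^sub>v w)) + E 0 *\<^sub>v ?z)"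
    unfolding D[of "th 0"] using Ecar[of 0] w ec
    by (simp add: mult_add_distrib_mat_vec del: diff_self)
  also have "\<dots> = th 0 \<cdot>\<^sub>v (E 0 *\<^sub>v w)" unfolding z0 using Ecar[of 0] w ec
    by (intro eq_vecI) (auto simp: mult_mat_vec)
  finally show "(E 0 * A) *\<^sub>v w = (th 0 \<cdot>\<^sub>m E 0) *\<^sub>v w"
    using A Ecar[of 0] w by (simp add: smult_mat_vec)
qed


lemma M3:
  assumes As: "As \<in> carrier_mat (d+1) (d+1)"
    and zz: "\<forall>l. 2 \<le> l \<and> l \<le> d \<longrightarrow> E 0 * As * E l = 0\<^sub>m (d+1) (d+1)"
  shows "E 0 * As * A = th 1 \<cdot>\<^sub>m (E 0 * As) + (th 0 - th 1) \<cdot>\<^sub>m (E 0 * As * E 0)"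
proof (rule mat_eq_vecI)
  have E0: "E 0 \<in> carrier_mat (d+1) (d+1)" using Ecar[of 0] by auto
  define M where "M = E 0 * As"
  have Mc: "M \<in> carrier_mat (d+1) (d+1)" unfolding M_def using E0 As by auto
  show "E 0 * As * A \<in> carrier_mat (d+1) (d+1)" using E0 As A by auto
  show "th 1 \<cdot>\<^sub>m (E 0 * As) + (th 0 - th 1) \<cdot>\<^sub>m (E 0 * As * E 0) \<in> carrier_mat (d+1) (d+1)"
    using E0 As by auto
  fix w :: "'a vec" assume w: "w \<in> carrier_vec (d+1)"
  obtain u where u: "\<forall>l\<in>{0..d}-{0}. u l \<in> eigenspace_of A (th l)"
    and D: "\<And>t. A *\<^sub>v w = t \<cdot>\<^sub>v w + (th 0 - t) \<cdot>\<^sub>v (E 0 *\<^sub>v w)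
          + vec (d+1) (\<lambda>r. \<Sum>l\<in>{0..d}-{0}. ((th l - t) \<cdot>\<^sub>v u l) $ r)"
    using Aw_decomp[OF w] by blast
  have uc: "\<And>l. l \<in> {0..d}-{0} \<Longrightarrow> u l \<in> carrier_vec (d+1)" using u eig_iff[OF A] by auto
  let ?z = "vec (d+1) (\<lambda>r. \<Sum>l\<in>{0..d}-{0}. ((th l - th 1) \<cdot>\<^sub>v u l) $ r)"
  have Mu: "M *\<^sub>v ((th l - th 1) \<cdot>\<^sub>v u l) = 0\<^sub>v (d+1)" if l: "l \<in> {0..d}-{0}" for l
  proof (cases "l = 1")
    case True
    thus ?thesis using Mc uc[OF l] by (intro eq_vecI) auto
  next
    case False
    hence l2: "2 \<le> l" "l \<le> d" using l by auto
    have "u l = E l *\<^sub>v u l" using G1a[of l "u l"] u l by auto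
    hence "M *\<^sub>v u l = (M * E l) *\<^sub>v u l" using Mc Ecar[of l] l2 uc[OF l] by simp
    also have "M * E l = 0\<^sub>m (d+1) (d+1)" using zz l2 unfolding M_def by auto
    also have "0\<^sub>m (d+1) (d+1) *\<^sub>v u l = 0\<^sub>v (d+1)"
      using uc[OF l] by (intro eq_vecI) (auto simp: scalar_prod_def)
    finally have "M *\<^sub>v u l = 0\<^sub>v (d+1)" .
    thus ?thesis using Mc uc[OF l] by (simp add: mult_mat_vec) (intro eq_vecI, auto)
  qed
  have Mz: "M *\<^sub>v ?z = 0\<^sub>v (d+1)"
  proof (rule eq_vecI)
    fix r assume "r < dim_vec (0\<^sub>v (d+1) :: 'a vec)"
    hence r: "r < d+1" by simp
    have "(M *\<^sub>v ?z) $ r = (\<Sum>c<d+1. M $$ (r,c) * ?z $ c)" by (rule mat_vec_idx[OF Mc _ r]) simp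
    also have "\<dots> = (\<Sum>c<d+1. M $$ (r,c) * (\<Sum>l\<in>{0..d}-{0}. ((th l - th 1) \<cdot>\<^sub>v u l) $ c))"
      by (intro sum.cong) auto
    also have "\<dots> = (\<Sum>l\<in>{0..d}-{0}. (M *\<^sub>v ((th l - th 1) \<cdot>\<^sub>v u l)) $ r)"
      by (rule sum_mult_mat_vec[OF Mc r, symmetric]) (use uc in auto)
    also have "\<dots> = 0" using Mu r by simp
    finally show "(M *\<^sub>v ?z) $ r = 0\<^sub>v (d+1) $ r" using r by simp
  qed (use Mc in auto)
  have ec: "E 0 *\<^sub>v w \<in> carrier_vec (d+1)" using E0 w by auto
  have "(E 0 * As * A) *\<^sub>v w = M *\<^sub>v (A *\<^sub>v w)" unfolding M_def
    by (rule assoc_mult_mat_vec[OF _ A w]) (use E0 As in auto)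
  also have "\<dots> = M *\<^sub>v (th 1 \<cdot>\<^sub>v w) + (M *\<^sub>v ((th 0 - th 1) \<cdot>\<^sub>v (E 0 *\<^sub>v w)) + M *\<^sub>v ?z)"
    unfolding D[of "th 1"] using Mc w ec
    by (simp add: mult_add_distrib_mat_vec)
  also have "\<dots> = th 1 \<cdot>\<^sub>v (M *\<^sub>v w) + (th 0 - th 1) \<cdot>\<^sub>v (M *\<^sub>v (E 0 *\<^sub>v w))"
    unfolding Mz using Mc w ec by (simp add: mult_mat_vec)
  also have "\<dots> = (th 1 \<cdot>\<^sub>m (E 0 * As) + (th 0 - th 1) \<cdot>\<^sub>m (E 0 * As * E 0)) *\<^sub>v w"
  proof -
    have "(th 1 \<cdot>\<^sub>m M + (th 0 - th 1) \<cdot>\<^sub>m (M * E 0)) *\<^sub>v w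
        = (th 1 \<cdot>\<^sub>m M) *\<^sub>v w + ((th 0 - th 1) \<cdot>\<^sub>m (M * E 0)) *\<^sub>v w"
      by (rule add_mult_distrib_mat_vec) (use Mc E0 w in auto)
    also have "\<dots> = th 1 \<cdot>\<^sub>v (M *\<^sub>v w) + (th 0 - th 1) \<cdot>\<^sub>v ((M * E 0) *\<^sub>v w)"
      using Mc E0 w by (simp add: smult_mat_vec[of _ "d+1" "d+1"])
    also have "(M * E 0) *\<^sub>v w = M *\<^sub>v (E 0 *\<^sub>v w)" using Mc E0 w by simp
    finally show ?thesis unfolding M_def by simp
  qed
  finally show "(E 0 * As * A) *\<^sub>v w = (th 1 \<cdot>\<^sub>m (E 0 * As) + (th 0 - th 1) \<cdot>\<^sub>m (E 0 * As * E 0)) *\<^sub>v w" .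
qed

lemma E_distinct:
  assumes l: "1 \<le> l" "l \<le> d"
  shows "E 0 \<noteq> E l"
proof
  assume eq: "E 0 = E l"
  from mf l have "eigenvalue A (th l)" unfolding mult_free_with_def by auto
  then obtain x where x: "x \<in> carrier_vec (d+1)" "x \<noteq> 0\<^sub>v (d+1)" "A *\<^sub>v x = th l \<cdot>\<^sub>v x"
    unfolding eigenvalue_def eigenvector_def using A by auto
  have xe: "x \<in> eigenspace_of A (th l)" using x eig_iff[OF A] by auto
  have "E l *\<^sub>v x = x" using G1a[OF l(2) xe] .
  moreover have "E 0 *\<^sub>v vec (d+1) (\<lambda>r. \<Sum>m\<in>{l}. (\<lambda>_. x) m $ r) = 0\<^sub>v (d+1)"
    by (rule G2) (use l xe in auto)
  moreover have "vec (d+1) (\<lambda>r. \<Sum>m\<in>{l}. (\<lambda>_. x) m $ r) = x" using x by auto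
  ultimately show False using eq x by simp
qed

end

lemma mtrace_comm:
  fixes X :: "'a::comm_ring_1 mat"
  assumes X: "X \<in> carrier_mat n m" and Y: "Y \<in> carrier_mat m n"
  shows "mtrace (X * Y) = mtrace (Y * X)"
proof -
  have "mtrace (X * Y) = (\<Sum>i<n. \<Sum>k<m. X $$ (i,k) * Y $$ (k,i))"
    unfolding mtrace_def using X Y by (auto simp: scalar_prod_def atLeast0LessThan intro!: sum.cong)
  also have "\<dots> = (\<Sum>k<m. \<Sum>i<n. Y $$ (k,i) * X $$ (i,k))" by (subst sum.swap) (simp add: mult.commute)
  also have "\<dots> = mtrace (Y * X)"
    unfolding mtrace_def using X Y by (auto simp: scalar_prod_def atLeast0LessThan intro!: sum.cong)
  finally show ?thesis .
qed

context
  fixes P Pi :: "'a::field mat" and n :: nat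
  assumes P: "P \<in> carrier_mat n n" and Pi: "Pi \<in> carrier_mat n n"
    and PPi: "P * Pi = 1\<^sub>m n" and PiP: "Pi * P = 1\<^sub>m n"
begin

lemma cj_mult:
  assumes X: "X \<in> carrier_mat n n" and Y: "Y \<in> carrier_mat n n"
  shows "Pi * (X * Y) * P = (Pi * X * P) * (Pi * Y * P)"
proof -
  have "(Pi * X * P) * (Pi * Y * P) = Pi * X * (P * Pi) * Y * P"
    using P Pi X Y by (simp add: assoc_mult_mat[of _ n n _ n _ n])
  also have "\<dots> = Pi * (X * Y) * P" unfolding PPi using P Pi X Y by simp
  finally show ?thesis by simp
qed

lemma cj_back:
  assumes X: "X \<in> carrier_mat n n"
  shows "P * (Pi * X * P) * Pi = X"
proof -
  have "P * (Pi * X * P) * Pi = (P * Pi) * X * (P * Pi)"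
    using P Pi X by (simp add: assoc_mult_mat[of _ n n _ n _ n])
  thus ?thesis unfolding PPi using X by simp
qed

lemma cj_of_conj:
  assumes M: "M \<in> carrier_mat n n"
  shows "Pi * (P * M * Pi) * P = M"
proof -
  have "Pi * (P * M * Pi) * P = (Pi * P) * M * (Pi * P)"
    using P Pi M by (simp add: assoc_mult_mat[of _ n n _ n _ n])
  thus ?thesis unfolding PiP using M by simp
qed

lemma cj_from:
  assumes X: "X \<in> carrier_mat n n" and M: "M \<in> carrier_mat n n" and XP: "X * P = P * M"
  shows "Pi * X * P = M"
proof -
  have "Pi * X * P = Pi * (X * P)" using Pi X P by simp
  also have "\<dots> = Pi * (P * M)" unfolding XP ..
  also have "\<dots> = (Pi * P) * M" using Pi P M by simp
  finally show ?thesis unfolding PiP using M by simp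
qed

lemma cj_smult:
  assumes X: "X \<in> carrier_mat n n"
  shows "Pi * (c \<cdot>\<^sub>m X) * P = c \<cdot>\<^sub>m (Pi * X * P)"
  using P Pi X by (simp add: mult_smult_distrib[of _ n n _ n] mult_smult_assoc_mat[of _ n n _ n])

lemma cj_add:
  assumes X: "X \<in> carrier_mat n n" and Y: "Y \<in> carrier_mat n n"
  shows "Pi * (X + Y) * P = Pi * X * P + Pi * Y * P"
  using P Pi X Y by (simp add: mult_add_distrib_mat[of _ n n] add_mult_distrib_mat[of _ n n])

lemma cj_zero: "Pi * 0\<^sub>m n n * P = 0\<^sub>m n n"
  using P Pi by simp

end

definition Emat :: "nat \<Rightarrow> nat \<Rightarrow> 'a::comm_ring_1 mat" where
  "Emat n i = mat n n (\<lambda>(r,c). if r = i \<and> c = i then 1 else 0)"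

lemma Emat_carrier[simp]: "Emat n i \<in> carrier_mat n n" unfolding Emat_def by simp
lemma Emat_dims[simp]: "dim_row (Emat n i) = n" "dim_col (Emat n i) = n" unfolding Emat_def by simp_all

lemma Emat_left:
  assumes M: "M \<in> carrier_mat n m" and i: "i < n"
  shows "Emat n i * M = mat n m (\<lambda>(r,c). if r = i then M $$ (i,c) else 0)"
proof (rule eq_matI)
  fix r c assume r: "r < dim_row (mat n m (\<lambda>(r,c). if r = i then M $$ (i,c) else 0))"
    and c: "c < dim_col (mat n m (\<lambda>(r,c). if r = i then M $$ (i,c) else 0))"
  have "(Emat n i * M) $$ (r,c) = (\<Sum>l<n. (if r = i \<and> l = i then 1 else 0) * M $$ (l,c))"
    using M r c unfolding Emat_def by (simp add: scalar_prod_def atLeast0LessThan)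
  also have "\<dots> = (\<Sum>l<n. if l = i then (if r = i then M $$ (l,c) else 0) else 0)"
    by (intro sum.cong) auto
  also have "\<dots> = (if r = i then M $$ (i,c) else 0)" using i by (simp add: sum.delta)
  finally show "(Emat n i * M) $$ (r,c) = mat n m (\<lambda>(r,c). if r = i then M $$ (i,c) else 0) $$ (r,c)"
    using r c by simp
qed (use M in auto)

lemma Emat_right:
  assumes M: "M \<in> carrier_mat m n" and i: "i < n"
  shows "M * Emat n i = mat m n (\<lambda>(r,c). if c = i then M $$ (r,i) else 0)"
proof (rule eq_matI)
  fix r c assume r: "r < dim_row (mat m n (\<lambda>(r,c). if c = i then M $$ (r,i) else 0))"
    and c: "c < dim_col (mat m n (\<lambda>(r,c). if c = i then M $$ (r,i) else 0))"
  have "(M * Emat n i) $$ (r,c) = (\<Sum>l<n. M $$ (r,l) * (if l = i \<and> c = i then 1 else 0))"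
    using M r c unfolding Emat_def by (simp add: scalar_prod_def atLeast0LessThan)
  also have "\<dots> = (\<Sum>l<n. if l = i then (if c = i then M $$ (r,l) else 0) else 0)"
    by (intro sum.cong) auto
  also have "\<dots> = (if c = i then M $$ (r,i) else 0)" using i by (simp add: sum.delta)
  finally show "(M * Emat n i) $$ (r,c) = mat m n (\<lambda>(r,c). if c = i then M $$ (r,i) else 0) $$ (r,c)"
    using r c by simp
qed (use M in auto)

lemma Emat_sandwich:
  assumes M: "M \<in> carrier_mat n n" and i: "i < n" and j: "j < n"
  shows "Emat n i * M * Emat n j = mat n n (\<lambda>(r,c). if r = i \<and> c = j then M $$ (i,j) else 0)"
proof -
  have c1: "Emat n i * M \<in> carrier_mat n n" using M by (intro mult_carrier_mat) auto
  have e: "Emat n i * M * Emat n j = mat n n (\<lambda>(r,c). if c = j then (Emat n i * M) $$ (r,j) else 0)"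
    by (rule Emat_right[OF c1 j])
  show ?thesis unfolding e
    by (rule eq_matI) (use i j in \<open>auto simp: Emat_left[OF M i]\<close>)
qed

lemma Emat_trace:
  assumes M: "M \<in> carrier_mat n n" and i: "i < n"
  shows "mtrace (Emat n i * M) = M $$ (i,i)"
  unfolding Emat_left[OF M i] mtrace_def using i M by (simp add: sum.delta)


lemma col_const:
  fixes Y :: "nat \<Rightarrow> nat \<Rightarrow> 'a::field" and x :: "nat \<Rightarrow> 'a"
  assumes Ytri: "\<forall>i\<le>d. \<forall>j\<le>d. (i > j + 1 \<or> j > i + 1) \<longrightarrow> Y i j = 0"
    and Ydiag: "\<forall>i\<le>d. Y i i = 0"
    and Ynz: "\<forall>i<d. Y i (i+1) \<noteq> 0 \<and> Y (i+1) i \<noteq> 0"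
    and rs: "\<forall>i\<le>d. (\<Sum>j\<le>d. Y i j) = t0"
    and ev: "\<forall>r\<le>d. (\<Sum>j\<le>d. Y r j * x j) = t0 * x r"
  shows "\<forall>r\<le>d. x r = x 0"
proof -
  define z where "z j = x j - x 0" for j
  have evz: "(\<Sum>j\<le>d. Y r j * z j) = t0 * z r" if r: "r \<le> d" for r
  proof -
    have "(\<Sum>j\<le>d. Y r j * z j) = (\<Sum>j\<le>d. Y r j * x j - Y r j * x 0)"
      unfolding z_def by (simp add: right_diff_distrib)
    also have "\<dots> = (\<Sum>j\<le>d. Y r j * x j) - (\<Sum>j\<le>d. Y r j) * x 0"
      by (simp add: sum_subtractf sum_distrib_right)
    also have "\<dots> = t0 * x r - t0 * x 0" using ev rs r by simp
    finally show ?thesis unfolding z_def by (simp add: right_diff_distrib)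
  qed
  have tri: "(if 0 < r then Y r (r-1) * z (r-1) else 0) + (if r < d then Y r (r+1) * z (r+1) else 0) = t0 * z r"
    if r: "r \<le> d" for r
  proof -
    have "(\<Sum>j\<le>d. Y r j * z j) = (if 0 < r then Y r (r-1) * z (r-1) else 0) + (if r < d then Y r (r+1) * z (r+1) else 0)"
    proof (rule tri_sum[OF r], intro allI impI)
      fix i assume i: "i \<le> d" and h: "i > r + 1 \<or> r > i + 1 \<or> i = r"
      show "Y r i * z i = 0"
      proof (cases "i = r")
        case True thus ?thesis using Ydiag r by simp
      next
        case False
        hence "Y r i = 0" using Ytri[rule_format, OF r i] h by blast
        thus ?thesis by simp
      qed
    qed
    thus ?thesis using evz[OF r] by simp
  qed
  have z0: "z 0 = 0" unfolding z_def by simp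
  have step: "z (k+2) = 0" if h: "k + 2 \<le> d" and a: "z k = 0" "z (k+1) = 0" for k
  proof -
    have "Y (k+1) k * z k + Y (k+1) (k+2) * z (k+2) = t0 * z (k+1)"
      using tri[of "k+1"] h by simp
    with a have "Y (k+1) (k+2) * z (k+2) = 0" by simp
    moreover have "Y (k+1) (k+2) \<noteq> 0" using Ynz[rule_format, of "Suc k"] h by simp
    ultimately show ?thesis by simp
  qed
  have z1: "z 1 = 0" if d1: "1 \<le> d"
  proof -
    have "Y 0 1 * z 1 = t0 * z 0" using tri[of 0] d1 by simp
    hence "Y 0 1 * z 1 = 0" using z0 by simp
    moreover have "Y 0 1 \<noteq> 0" using Ynz[rule_format, of 0] d1 by simp
    ultimately show ?thesis by simp
  qed
  have both: "k + 1 \<le> d \<Longrightarrow> z k = 0 \<and> z (k+1) = 0" for k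
  proof (induction k)
    case 0 thus ?case using z0 z1 by simp
  next
    case (Suc k)
    hence "z k = 0 \<and> z (k+1) = 0" by simp
    moreover have "z (k+2) = 0" using step[of k] Suc.prems calculation by simp
    ultimately show ?case by simp
  qed
  have "\<forall>r\<le>d. z r = 0"
  proof (intro allI impI)
    fix r assume r: "r \<le> d"
    show "z r = 0"
    proof (cases r)
      case 0 thus ?thesis using z0 by simp
    next
      case (Suc m) thus ?thesis using both[of m] r by simp
    qed
  qed
  thus ?thesis
  proof (intro allI impI)
    fix r assume "\<forall>r\<le>d. z r = 0" "r \<le> d"
    hence "z r = 0" by blast
    thus "x r = x 0" unfolding z_def by (simp add: right_minus_eq)
  qed
qed

lemma diag_right:
  fixes X :: "'a::comm_ring_1 mat"
  assumes X: "X \<in> carrier_mat m n"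
  shows "X * mat n n (\<lambda>(i,j). if i = j then f i else 0) = mat m n (\<lambda>(r,c). X $$ (r,c) * f c)"
proof (rule eq_matI)
  fix r c assume r: "r < dim_row (mat m n (\<lambda>(r,c). X $$ (r,c) * f c))"
    and c: "c < dim_col (mat m n (\<lambda>(r,c). X $$ (r,c) * f c))"
  have "(X * mat n n (\<lambda>(i,j). if i = j then f i else 0)) $$ (r,c) = (\<Sum>l<n. X $$ (r,l) * (if l = c then f l else 0))"
    using X r c by (simp add: scalar_prod_def atLeast0LessThan)
  also have "\<dots> = (\<Sum>l<n. if l = c then X $$ (r,l) * f l else 0)"
    by (intro sum.cong) auto
  also have "\<dots> = X $$ (r,c) * f c" using c by (simp add: sum.delta)
  finally show "(X * mat n n (\<lambda>(i,j). if i = j then f i else 0)) $$ (r,c) = mat m n (\<lambda>(r,c). X $$ (r,c) * f c) $$ (r,c)"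
    using r c by simp
qed (use X in auto)


lemma sum_idx_smult:
  assumes "\<forall>i\<in>I. v i \<in> carrier_vec n" "r < n"
  shows "(\<Sum>i\<in>I. (c i \<cdot>\<^sub>v v i) $ r) = (\<Sum>i\<in>I. c i * v i $ r)"
proof (rule sum.cong[OF refl])
  fix i assume "i \<in> I"
  hence "v i \<in> carrier_vec n" using assms by blast
  thus "(c i \<cdot>\<^sub>v v i) $ r = c i * v i $ r" using assms(2) by (rule idx_smult)
qed

theorem lemma7p7:
  fixes d :: nat and Es E :: "nat \<Rightarrow> 'a::field mat" and A :: "'a mat"
    and th ths :: "nat \<Rightarrow> 'a"
  assumes "d \<ge> 3"
    and "orth_idem_system d Es"
    and "A \<in> carrier_mat (d+1) (d+1)"
    and "\<forall>i\<le>d. \<forall>j\<le>d. (i > j + 1 \<or> j > i + 1) \<longrightarrow> Es i * A * Es j = 0\<^sub>m (d+1) (d+1)"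
    and "\<forall>i\<le>d. \<forall>j\<le>d. (i = j + 1 \<or> j = i + 1) \<longrightarrow> Es i * A * Es j \<noteq> 0\<^sub>m (d+1) (d+1)"
    and "mult_free_with d A th E"
    and "bipartite_wrt d Es A"
    and "inj_on ths {0..d}"
    and "normalizing d Es A (th 0)"
    and "Delta_adj d E (msum (d+1) (\<lambda>i. ths i \<cdot>\<^sub>m Es i) {0..d}) 0 1"
    and "\<forall>j\<le>d. j \<noteq> 0 \<and> j \<noteq> 1 \<longrightarrow>
           \<not> Delta_adj d E (msum (d+1) (\<lambda>i. ths i \<cdot>\<^sub>m Es i) {0..d}) 0 j"
  shows "\<forall>i. 1 \<le> i \<and> i \<le> d - 1 \<longrightarrow>
           th 0 * ((ths (i-1) - ths 1) / (ths i - ths 0)) \<noteq> th 1 \<and>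
           th 0 * ((ths (i+1) - ths 1) / (ths i - ths 0)) \<noteq> th 1"
proof -
  note Ac = assms(3) and mf = assms(6)
  define As where "As = msum (d+1) (\<lambda>i. ths i \<cdot>\<^sub>m Es i) {0..d}"
  have Esc: "\<And>i. i \<le> d \<Longrightarrow> Es i \<in> carrier_mat (d+1) (d+1)"
    and Esm: "\<And>i j. i \<le> d \<Longrightarrow> j \<le> d \<Longrightarrow> Es i * Es j = (if i = j then Es i else 0\<^sub>m (d+1) (d+1))"
    using assms(2) unfolding orth_idem_system_def by auto
  from assms(9) obtain v Y where
    vc: "\<forall>i\<le>d. v i \<in> carrier_vec (d+1) \<and> v i \<in> (\<lambda>x. Es i *\<^sub>v x) ` carrier_vec (d+1)"
    and indep: "\<forall>c :: nat \<Rightarrow> 'a. finsum_vec TYPE('a) (d+1) (\<lambda>i. c i \<cdot>\<^sub>v v i) {0..d} = 0\<^sub>v (d+1)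
            \<longrightarrow> (\<forall>i\<le>d. c i = 0)"
    and Av: "\<forall>j\<le>d. A *\<^sub>v v j = finsum_vec TYPE('a) (d+1) (\<lambda>i. Y i j \<cdot>\<^sub>v v i) {0..d}"
    and rs: "\<forall>i\<le>d. (\<Sum>j\<le>d. Y i j) = th 0"
    unfolding normalizing_def by blast
  have vcar: "\<And>i. i \<le> d \<Longrightarrow> v i \<in> carrier_vec (d+1)" using vc by auto
  have set_eq: "{0..d} = {..<d+1}" by auto
  define P where "P = mat (d+1) (d+1) (\<lambda>(r,k). v k $ r)"
  define Ym where "Ym = mat (d+1) (d+1) (\<lambda>(i,j). Y i j)"
  define D where "D = mat (d+1) (d+1) (\<lambda>(i,j). if i = j then ths i else 0)"
  have Pc: "P \<in> carrier_mat (d+1) (d+1)" unfolding P_def by simp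
  have Ymc: "Ym \<in> carrier_mat (d+1) (d+1)" unfolding Ym_def by simp
  have Dc: "D \<in> carrier_mat (d+1) (d+1)" unfolding D_def by simp
  have colP: "col P k = v k" if k: "k \<le> d" for k
    using vcar[OF k] k unfolding P_def by (intro eq_vecI) auto
  have "det P \<noteq> 0"
  proof
    assume "det P = 0"
    then obtain c where c: "c \<in> carrier_vec (d+1)" "c \<noteq> 0\<^sub>v (d+1)" "P *\<^sub>v c = 0\<^sub>v (d+1)"
      using det_0_iff_vec_prod_zero[OF Pc] by auto
    have fv: "finsum_vec TYPE('a) (d+1) (\<lambda>i. c $ i \<cdot>\<^sub>v v i) {0..d} = vec (d+1) (\<lambda>r. \<Sum>i\<in>{0..d}. (c $ i \<cdot>\<^sub>v v i) $ r)"
      by (rule finsum_vec_vec) (use vcar in auto)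
    have "finsum_vec TYPE('a) (d+1) (\<lambda>i. c $ i \<cdot>\<^sub>v v i) {0..d} = P *\<^sub>v c"
    proof (rule eq_vecI)
      fix r assume "r < dim_vec (P *\<^sub>v c)"
      hence r: "r < d+1" using Pc by simp
      have "(P *\<^sub>v c) $ r = (\<Sum>k<d+1. P $$ (r,k) * c $ k)" by (rule mat_vec_idx[OF Pc c(1) r])
      also have "\<dots> = (\<Sum>k\<in>{0..d}. (c $ k \<cdot>\<^sub>v v k) $ r)"
        unfolding set_eq
      proof (rule sum.cong[OF refl])
        fix k assume "k \<in> {..<d+1}"
        hence k: "k < d+1" by simp
        hence vk: "v k \<in> carrier_vec (d+1)" using vcar by simp
        show "P $$ (r,k) * c $ k = (c $ k \<cdot>\<^sub>v v k) $ r"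
          unfolding P_def idx_smult[OF vk r] using r k by (simp add: mult.commute)
      qed
      finally show "finsum_vec TYPE('a) (d+1) (\<lambda>i. c $ i \<cdot>\<^sub>v v i) {0..d} $ r = (P *\<^sub>v c) $ r"
        unfolding fv using r by simp
    qed (use fv Pc in auto)
    hence "\<forall>i\<le>d. c $ i = 0" using indep c(3) by auto
    hence "c = 0\<^sub>v (d+1)" using c(1) by (intro eq_vecI) auto
    thus False using c(2) by simp
  qed
  from det_non_zero_imp_unit[OF Pc this, of "()"]
  obtain Pi where Pic: "Pi \<in> carrier_mat (d+1) (d+1)" and PiP: "Pi * P = 1\<^sub>m (d+1)" and PPi: "P * Pi = 1\<^sub>m (d+1)"
    unfolding Units_def ring_mat_def by auto
  note cj = cj_mult[OF Pc Pic PPi PiP] cj_back[OF Pc Pic PPi PiP] cj_of_conj[OF Pc Pic PPi PiP]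
    cj_from[OF Pc Pic PPi PiP] cj_smult[OF Pc Pic PPi PiP] cj_add[OF Pc Pic PPi PiP] cj_zero[OF Pc Pic PPi PiP]
  have AP: "A * P = P * Ym"
  proof (rule eq_matI)
    fix r k assume r: "r < dim_row (P * Ym)" and k: "k < dim_col (P * Ym)"
    hence r: "r < d+1" and k: "k < d+1" using Pc Ymc by auto
    have fv: "finsum_vec TYPE('a) (d+1) (\<lambda>i. Y i k \<cdot>\<^sub>v v i) {0..d} = vec (d+1) (\<lambda>r. \<Sum>i\<in>{0..d}. (Y i k \<cdot>\<^sub>v v i) $ r)"
      by (rule finsum_vec_vec) (use vcar in auto)
    have "(A * P) $$ (r,k) = (A *\<^sub>v v k) $ r" using Ac Pc r k colP[of k] by simp
    also have "\<dots> = (\<Sum>i\<in>{0..d}. Y i k * v i $ r)"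
    proof -
      have "(A *\<^sub>v v k) $ r = (\<Sum>i\<in>{0..d}. (Y i k \<cdot>\<^sub>v v i) $ r)" using Av k fv r by auto
      also have "\<dots> = (\<Sum>i\<in>{0..d}. Y i k * v i $ r)" by (rule sum_idx_smult) (use vcar r in auto)
      finally show ?thesis .
    qed
    also have "\<dots> = (P * Ym) $$ (r,k)" using Pc Ymc r k unfolding P_def Ym_def
      by (simp add: scalar_prod_def set_eq atLeast0LessThan mult.commute)
    finally show "(A * P) $$ (r,k) = (P * Ym) $$ (r,k)" .
  qed (use Ac Pc Ymc in auto)
  have Esv: "Es i *\<^sub>v v k = (if k = i then v k else 0\<^sub>v (d+1))" if i: "i \<le> d" and k: "k \<le> d" for i k
  proof -
    obtain x where x: "x \<in> carrier_vec (d+1)" "v k = Es k *\<^sub>v x" using vc k by auto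
    have "Es i *\<^sub>v v k = (Es i * Es k) *\<^sub>v x" using x Esc[OF i] Esc[OF k] by simp
    also have "\<dots> = (if k = i then v k else 0\<^sub>v (d+1))" using Esm[OF i k] x by auto
    finally show ?thesis .
  qed
  have EsP: "Es i * P = P * Emat (d+1) i" if i: "i \<le> d" for i
  proof (rule eq_matI)
    fix r k assume r: "r < dim_row (P * Emat (d+1) i)" and k: "k < dim_col (P * Emat (d+1) i)"
    hence r: "r < d+1" and k: "k < d+1" using Pc by auto
    have "(Es i * P) $$ (r,k) = (Es i *\<^sub>v v k) $ r" using Esc[OF i] Pc r k colP[of k] by simp
    also have "\<dots> = (if k = i then v k $ r else 0)" using Esv[OF i, of k] k r by auto
    also have "\<dots> = (P * Emat (d+1) i) $$ (r,k)"
    proof -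
      have il: "i < d+1" using i by simp
      show ?thesis unfolding Emat_right[OF Pc il] using r k unfolding P_def by simp
    qed
    finally show "(Es i * P) $$ (r,k) = (P * Emat (d+1) i) $$ (r,k)" .
  qed (use Esc[OF i] Pc in auto)
  have Asc: "As \<in> carrier_mat (d+1) (d+1)" unfolding As_def msum_def by simp
  have AsP: "As * P = P * D"
  proof (rule eq_matI)
    fix r k assume r: "r < dim_row (P * D)" and k: "k < dim_col (P * D)"
    hence r: "r < d+1" and k: "k < d+1" using Pc Dc by auto
    have As_entry: "As $$ (r,l) = (\<Sum>i\<in>{0..d}. ths i * Es i $$ (r,l))" if l: "l < d+1" for l
    proof -
      have "As $$ (r,l) = (\<Sum>i\<in>{0..d}. (ths i \<cdot>\<^sub>m Es i) $$ (r,l))" unfolding As_def msum_def using r l by simp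
      also have "\<dots> = (\<Sum>i\<in>{0..d}. ths i * Es i $$ (r,l))"
      proof (rule sum.cong[OF refl])
        fix i assume "i \<in> {0..d}"
        hence "Es i \<in> carrier_mat (d+1) (d+1)" using Esc by simp
        thus "(ths i \<cdot>\<^sub>m Es i) $$ (r,l) = ths i * Es i $$ (r,l)" using r l by simp
      qed
      finally show ?thesis .
    qed
    have "(As * P) $$ (r,k) = (\<Sum>l<d+1. As $$ (r,l) * P $$ (l,k))"
      using Asc Pc r k by (simp add: scalar_prod_def atLeast0LessThan)
    also have "\<dots> = (\<Sum>l<d+1. \<Sum>i\<in>{0..d}. ths i * (Es i $$ (r,l) * P $$ (l,k)))"
    proof (rule sum.cong[OF refl])
      fix l assume "l \<in> {..<d+1}"
      hence l: "l < d+1" by simp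
      show "As $$ (r,l) * P $$ (l,k) = (\<Sum>i\<in>{0..d}. ths i * (Es i $$ (r,l) * P $$ (l,k)))"
        unfolding As_entry[OF l] by (simp add: sum_distrib_right mult.assoc)
    qed
    also have "\<dots> = (\<Sum>i\<in>{0..d}. ths i * (\<Sum>l<d+1. Es i $$ (r,l) * P $$ (l,k)))"
      unfolding sum_distrib_left by (rule sum.swap)
    also have "\<dots> = (\<Sum>i\<in>{0..d}. if i = k then ths i * P $$ (r,k) else 0)"
    proof (rule sum.cong[OF refl])
      fix i assume "i \<in> {0..d}"
      hence i: "i \<le> d" and il: "i < d+1" by auto
      have "(\<Sum>l<d+1. Es i $$ (r,l) * P $$ (l,k)) = (Es i * P) $$ (r,k)"
        using Esc[OF i] Pc r k by (simp add: scalar_prod_def atLeast0LessThan)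
      also have "\<dots> = (P * Emat (d+1) i) $$ (r,k)" using EsP[OF i] by simp
      also have "\<dots> = (if k = i then P $$ (r,i) else 0)" unfolding Emat_right[OF Pc il] using r k by simp
      finally show "ths i * (\<Sum>l<d+1. Es i $$ (r,l) * P $$ (l,k)) = (if i = k then ths i * P $$ (r,k) else 0)"
        by auto
    qed
    also have "\<dots> = ths k * P $$ (r,k)" using k by (simp add: sum.delta)
    also have "\<dots> = (P * D) $$ (r,k)" unfolding D_def diag_right[OF Pc] using r k by simp
    finally show "(As * P) $$ (r,k) = (P * D) $$ (r,k)" .
  qed (use Asc Pc Dc in auto)
  have cjA: "Pi * A * P = Ym" using cj(4)[OF Ac Ymc AP] .
  have cjEs: "Pi * Es i * P = Emat (d+1) i" if "i \<le> d" for i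
    using cj(4)[OF Esc[OF that] _ EsP[OF that]] by simp
  have cjAs: "Pi * As * P = D" using cj(4)[OF Asc Dc AsP] .
  have sandw: "Pi * (Es i * A * Es j) * P = Emat (d+1) i * Ym * Emat (d+1) j" if "i \<le> d" "j \<le> d" for i j
  proof -
    have "Pi * (Es i * A * Es j) * P = Pi * (Es i * A) * P * (Pi * Es j * P)"
      by (rule cj(1)[OF mult_carrier_mat[OF Esc[OF that(1)] Ac] Esc[OF that(2)]])
    also have "Pi * (Es i * A) * P = (Pi * Es i * P) * (Pi * A * P)"
      by (rule cj(1)[OF Esc[OF that(1)] Ac])
    finally show ?thesis using cjEs that cjA by simp
  qed
  have sandw_entry: "(Emat (d+1) i * Ym * Emat (d+1) j) = mat (d+1) (d+1) (\<lambda>(r,c). if r = i \<and> c = j then Y i j else 0)"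
    if "i \<le> d" "j \<le> d" for i j
  proof -
    have il: "i < d+1" and jl: "j < d+1" using that by auto
    have "Ym $$ (i,j) = Y i j" using il jl unfolding Ym_def by simp
    thus ?thesis unfolding Emat_sandwich[OF Ymc il jl] by (simp only:)
  qed
  have Ytri: "\<forall>i\<le>d. \<forall>j\<le>d. (i > j + 1 \<or> j > i + 1) \<longrightarrow> Y i j = 0"
  proof (intro allI impI)
    fix i j assume i: "i \<le> d" and j: "j \<le> d" and h: "i > j + 1 \<or> j > i + 1"
    have "Es i * A * Es j = 0\<^sub>m (d+1) (d+1)" using assms(4) i j h by auto
    hence "Emat (d+1) i * Ym * Emat (d+1) j = 0\<^sub>m (d+1) (d+1)" using sandw[OF i j] cj(7) by simp
    hence "(Emat (d+1) i * Ym * Emat (d+1) j) $$ (i,j) = 0" using i j by simp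
    thus "Y i j = 0" unfolding sandw_entry[OF i j] using i j by simp
  qed
  have Ynz: "\<forall>i<d. Y i (i+1) \<noteq> 0 \<and> Y (i+1) i \<noteq> 0"
  proof -
    have "Y i j \<noteq> 0" if i: "i \<le> d" and j: "j \<le> d" and h: "i = j + 1 \<or> j = i + 1" for i j
    proof
      assume "Y i j = 0"
      hence "Emat (d+1) i * Ym * Emat (d+1) j = 0\<^sub>m (d+1) (d+1)"
        unfolding sandw_entry[OF i j] by (intro eq_matI) auto
      hence "Pi * (Es i * A * Es j) * P = 0\<^sub>m (d+1) (d+1)" using sandw[OF i j] by simp
      hence "P * (Pi * (Es i * A * Es j) * P) * Pi = 0\<^sub>m (d+1) (d+1)" using Pc Pic by simp
      moreover have c: "Es i * A * Es j \<in> carrier_mat (d+1) (d+1)"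
        using mult_carrier_mat[OF mult_carrier_mat[OF Esc[OF i] Ac] Esc[OF j]] .
      ultimately have "Es i * A * Es j = 0\<^sub>m (d+1) (d+1)" using cj(2)[OF c] by simp
      thus False using assms(5) i j h by auto
    qed
    thus ?thesis by auto
  qed
  have Ydiag: "\<forall>i\<le>d. Y i i = 0"
  proof (intro allI impI)
    fix i assume i: "i \<le> d"
    have EA: "Es i * A \<in> carrier_mat (d+1) (d+1)" using Esc[OF i] Ac by auto
    have c1: "Pi * (Es i * A) * P = Emat (d+1) i * Ym"
      using cj(1)[OF Esc[OF i] Ac] cjEs[OF i] cjA by simp
    have "Es i * A = P * (Emat (d+1) i * Ym) * Pi" using cj(2)[OF EA] c1 by simp
    hence "mtrace (Es i * A) = mtrace ((P * (Emat (d+1) i * Ym)) * Pi)" by simp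
    also have "\<dots> = mtrace (Pi * (P * (Emat (d+1) i * Ym)))"
      by (rule mtrace_comm) (use Pc Pic Ymc in auto)
    also have "Pi * (P * (Emat (d+1) i * Ym)) = Emat (d+1) i * Ym"
    proof -
      have "Pi * (P * (Emat (d+1) i * Ym)) = (Pi * P) * (Emat (d+1) i * Ym)"
        using assoc_mult_mat[OF Pic Pc mult_carrier_mat[OF Emat_carrier Ymc]] by simp
      thus ?thesis unfolding PiP using Ymc by simp
    qed
    also have "mtrace (Emat (d+1) i * Ym) = Y i i" using Emat_trace[OF Ymc, of i] i unfolding Ym_def by simp
    finally show "Y i i = 0" using assms(7) i unfolding bipartite_wrt_def by simp
  qed
  have E0c: "E 0 \<in> carrier_mat (d+1) (d+1)" using Ecar[OF Ac mf, of 0] by simp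
  have zz: "\<forall>l. 2 \<le> l \<and> l \<le> d \<longrightarrow> E 0 * As * E l = 0\<^sub>m (d+1) (d+1)"
  proof (intro allI impI)
    fix l assume l: "2 \<le> l \<and> l \<le> d"
    have "\<not> Delta_adj d E As 0 l" using assms(11) l unfolding As_def by auto
    moreover have "E 0 \<noteq> E l" using E_distinct[OF Ac mf, of l] l by auto
    ultimately show "E 0 * As * E l = 0\<^sub>m (d+1) (d+1)" unfolding Delta_adj_def by auto
  qed
  have E0nz: "E 0 \<noteq> 0\<^sub>m (d+1) (d+1)"
  proof
    assume "E 0 = 0\<^sub>m (d+1) (d+1)"
    hence "E 0 * As * E 1 = 0\<^sub>m (d+1) (d+1)" using Asc Ecar[OF Ac mf, of 1] assms(1) by simp
    thus False using assms(10) unfolding Delta_adj_def As_def by simp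
  qed
  define Ec where "Ec = Pi * E 0 * P"
  have Ecc: "Ec \<in> carrier_mat (d+1) (d+1)" unfolding Ec_def using Pc Pic E0c by auto
  have cM1: "Ym * Ec = th 0 \<cdot>\<^sub>m Ec"
    using cj(1)[OF Ac E0c] cj(5)[OF E0c, of "th 0"] M1[OF Ac mf] cjA unfolding Ec_def by simp
  have cM2: "Ec * Ym = th 0 \<cdot>\<^sub>m Ec"
    using cj(1)[OF E0c Ac] cj(5)[OF E0c, of "th 0"] M2[OF Ac mf] cjA unfolding Ec_def by simp
  have cM3: "Ec * D * Ym = th 1 \<cdot>\<^sub>m (Ec * D) + (th 0 - th 1) \<cdot>\<^sub>m (Ec * D * Ec)"
  proof -
    have c1: "E 0 * As \<in> carrier_mat (d+1) (d+1)" using E0c Asc by auto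
    have "Pi * (E 0 * As * A) * P = Ec * D * Ym"
      using cj(1)[OF c1 Ac] cj(1)[OF E0c Asc] cjA cjAs unfolding Ec_def by simp
    moreover have "Pi * (th 1 \<cdot>\<^sub>m (E 0 * As) + (th 0 - th 1) \<cdot>\<^sub>m (E 0 * As * E 0)) * P
        = th 1 \<cdot>\<^sub>m (Ec * D) + (th 0 - th 1) \<cdot>\<^sub>m (Ec * D * Ec)"
    proof -
      have c2: "E 0 * As * E 0 \<in> carrier_mat (d+1) (d+1)" using E0c Asc by auto
      have "Pi * (th 1 \<cdot>\<^sub>m (E 0 * As) + (th 0 - th 1) \<cdot>\<^sub>m (E 0 * As * E 0)) * P
          = Pi * (th 1 \<cdot>\<^sub>m (E 0 * As)) * P + Pi * ((th 0 - th 1) \<cdot>\<^sub>m (E 0 * As * E 0)) * P"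
        by (rule cj(6)) (use c1 c2 in auto)
      also have "\<dots> = th 1 \<cdot>\<^sub>m (Pi * (E 0 * As) * P) + (th 0 - th 1) \<cdot>\<^sub>m (Pi * (E 0 * As * E 0) * P)"
        using cj(5)[OF c1] cj(5)[OF c2] by simp
      also have "Pi * (E 0 * As) * P = Ec * D" using cj(1)[OF E0c Asc] cjAs unfolding Ec_def by simp
      also have "Pi * (E 0 * As * E 0) * P = Ec * D * Ec"
        using cj(1)[OF c1 E0c] cj(1)[OF E0c Asc] cjAs unfolding Ec_def by simp
      finally show ?thesis .
    qed
    ultimately show ?thesis using M3[OF Ac mf Asc zz] by simp
  qed
  have Ecnz: "Ec \<noteq> 0\<^sub>m (d+1) (d+1)"
  proof
    assume "Ec = 0\<^sub>m (d+1) (d+1)"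
    hence "P * Ec * Pi = 0\<^sub>m (d+1) (d+1)" using Pc Pic by simp
    thus False using cj(2)[OF E0c] E0nz unfolding Ec_def by simp
  qed
  have sumconv: "(\<Sum>i<d+1. f i) = (\<Sum>i\<le>d. f i)" for f :: "nat \<Rightarrow> 'a"
    by (simp add: lessThan_Suc_atMost)
  define y where "y k = Ec $$ (0,k)" for k
  have rows: "Ec $$ (r,k) = y k" if r: "r \<le> d" and k: "k \<le> d" for r k
  proof -
    have "\<forall>r\<le>d. (\<Sum>j\<le>d. Y r j * Ec $$ (j,k)) = th 0 * Ec $$ (r,k)"
    proof (intro allI impI)
      fix r assume r: "r \<le> d"
      have e2: "(Ym * Ec) $$ (r,k) = th 0 * Ec $$ (r,k)" using cM1 Ecc r k by simp
      have e1: "(Ym * Ec) $$ (r,k) = (\<Sum>j<d+1. Y r j * Ec $$ (j,k))"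
        using Ymc Ecc r k unfolding Ym_def by (simp add: scalar_prod_def atLeast0LessThan del: sum.lessThan_Suc)
      show "(\<Sum>j\<le>d. Y r j * Ec $$ (j,k)) = th 0 * Ec $$ (r,k)"
        unfolding sumconv[symmetric] by (simp only: e1[symmetric] e2)
    qed
    from col_const[OF Ytri Ydiag Ynz rs this] r have "Ec $$ (r,k) = Ec $$ (0,k)" by blast
    thus ?thesis unfolding y_def .
  qed
  have ynz: "\<exists>k\<le>d. y k \<noteq> 0"
  proof (rule ccontr)
    assume H: "\<not> (\<exists>k\<le>d. y k \<noteq> 0)"
    have "Ec = 0\<^sub>m (d+1) (d+1)"
    proof (rule eq_matI)
      fix r k assume "r < dim_row (0\<^sub>m (d+1) (d+1) :: 'a mat)" "k < dim_col (0\<^sub>m (d+1) (d+1) :: 'a mat)"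
      hence r: "r \<le> d" and k: "k \<le> d" by auto
      have "Ec $$ (r,k) = y k" by (rule rows[OF r k])
      also have "y k = 0" using H k by blast
      finally show "Ec $$ (r,k) = 0\<^sub>m (d+1) (d+1) $$ (r,k)" using r k by simp
    qed (use Ecc in auto)
    thus False using Ecnz by simp
  qed
  have L: "\<forall>j\<le>d. (\<Sum>i\<le>d. y i * Y i j) = th 0 * y j"
  proof (intro allI impI)
    fix j assume j: "j \<le> d"
    have e2: "(Ec * Ym) $$ (0,j) = th 0 * y j" using cM2 Ecc j unfolding y_def by simp
    have e1: "(Ec * Ym) $$ (0,j) = (\<Sum>i<d+1. y i * Y i j)"
      using Ymc Ecc j unfolding Ym_def y_def by (simp add: scalar_prod_def atLeast0LessThan del: sum.lessThan_Suc)
    show "(\<Sum>i\<le>d. y i * Y i j) = th 0 * y j"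
      unfolding sumconv[symmetric] by (simp only: e1[symmetric] e2)
  qed
  have ED: "Ec * D = mat (d+1) (d+1) (\<lambda>(r,c). Ec $$ (r,c) * ths c)"
    unfolding D_def by (rule diag_right[OF Ecc])
  have Mq: "\<forall>j\<le>d. (\<Sum>i\<le>d. y i * ths i * Y i j) = th 1 * ths j * y j + ((th 0 - th 1) * (\<Sum>i\<le>d. y i * ths i)) * y j"
  proof (intro allI impI)
    fix j assume j: "j \<le> d"
    have EDc: "Ec * D \<in> carrier_mat (d+1) (d+1)" using Ecc Dc by auto
    have e0: "(Ec * D * Ym) $$ (0,j) = (th 1 \<cdot>\<^sub>m (Ec * D) + (th 0 - th 1) \<cdot>\<^sub>m (Ec * D * Ec)) $$ (0,j)"
      using cM3 by simp
    have e1: "(Ec * D * Ym) $$ (0,j) = (\<Sum>i<d+1. y i * ths i * Y i j)"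
      using Ymc EDc j unfolding ED unfolding Ym_def y_def
      by (simp add: scalar_prod_def atLeast0LessThan del: sum.lessThan_Suc)
    have e2: "(Ec * D * Ec) $$ (0,j) = (\<Sum>i<d+1. y i * ths i) * y j"
    proof -
      have "(Ec * D * Ec) $$ (0,j) = (\<Sum>i<d+1. (y i * ths i) * Ec $$ (i,j))"
        using Ecc EDc j unfolding ED unfolding y_def
        by (simp add: scalar_prod_def atLeast0LessThan del: sum.lessThan_Suc)
      also have "\<dots> = (\<Sum>i<d+1. y i * ths i * y j)"
        using rows j by (intro sum.cong refl) simp
      also have "\<dots> = (\<Sum>i<d+1. y i * ths i) * y j" by (rule sum_distrib_right[symmetric])
      finally show ?thesis .
    qed
    have e3: "(th 1 \<cdot>\<^sub>m (Ec * D) + (th 0 - th 1) \<cdot>\<^sub>m (Ec * D * Ec)) $$ (0,j)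
        = th 1 * (y j * ths j) + (th 0 - th 1) * (Ec * D * Ec) $$ (0,j)"
      using EDc Ecc j unfolding ED y_def by simp
    have gen: "X = th 1 * (yj * tj) + (th 0 - th 1) * (S * yj) \<Longrightarrow> X = th 1 * tj * yj + ((th 0 - th 1) * S) * yj"
      for X S yj tj :: 'a by (simp add: algebra_simps)
    have "(\<Sum>i<d+1. y i * ths i * Y i j) = th 1 * (y j * ths j) + (th 0 - th 1) * ((\<Sum>i<d+1. y i * ths i) * y j)"
      by (simp only: e1[symmetric] e0 e3 e2)
    from gen[OF this]
    show "(\<Sum>i\<le>d. y i * ths i * Y i j) = th 1 * ths j * y j + ((th 0 - th 1) * (\<Sum>i\<le>d. y i * ths i)) * y j"
      unfolding sumconv .
  qed
  have d1: "d \<ge> 1" using assms(1) by simp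
  show ?thesis
    by (rule final_scalar[OF d1 Ytri Ydiag Ynz assms(8) ynz L Mq])
qed

end
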